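(* Let $n,k$ be positive integers with $k\le\frac14 n$. Then every $k$-homogeneous partial latin square of order $n$ is contained in a $(k+1)$-homogeneous partial latin square of order $n$ (that is, some of its blank cells can be filled to obtain a $(k+1)$-homogeneous partial latin square).
   Context: A $k$-homogeneous partial latin square of order $n$ is an $n\times n$ array in which each cell is either blank or contains one of the symbols $\{1,2,\dots,n\}$, such that (i) no symbol occurs twice in any row or any column, (ii) each symbol occurs exactly $k$ times in the array, and (iii) each row and each column contains exactly $k$ filled cells. *)

theory Defs
  imports Main
begin

text \<open>A partial array of order n: cells (i,j) with i,j < n; L i j = None means blank,
  L i j = Some s means the cell contains symbol s. Outside the n x n range L is None.\<close>

definition partial_latin_square :: "nat \<Rightarrow> (nat \<Rightarrow> nat \<Rightarrow> nat option) \<Rightarrow> bool" where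
  "partial_latin_square n L \<longleftrightarrow>
     (\<forall>i j. (i \<ge> n \<or> j \<ge> n) \<longrightarrow> L i j = None) \<and>
     (\<forall>i<n. \<forall>j<n. \<forall>s. L i j = Some s \<longrightarrow> s \<in> {1..n}) \<and>
     (\<forall>i<n. \<forall>j1<n. \<forall>j2<n. j1 \<noteq> j2 \<longrightarrow> L i j1 \<noteq> None \<longrightarrow> L i j1 \<noteq> L i j2) \<and>
     (\<forall>j<n. \<forall>i1<n. \<forall>i2<n. i1 \<noteq> i2 \<longrightarrow> L i1 j \<noteq> None \<longrightarrow> L i1 j \<noteq> L i2 j)"

definition homogeneous_pls :: "nat \<Rightarrow> nat \<Rightarrow> (nat \<Rightarrow> nat \<Rightarrow> nat option) \<Rightarrow> bool" where
  "homogeneous_pls k n L \<longleftrightarrow>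
     partial_latin_square n L \<and>
     (\<forall>s\<in>{1..n}. card {(i, j). i < n \<and> j < n \<and> L i j = Some s} = k) \<and>
     (\<forall>i<n. card {j. j < n \<and> L i j \<noteq> None} = k) \<and>
     (\<forall>j<n. card {i. i < n \<and> L i j \<noteq> None} = k)"

definition pls_contained :: "nat \<Rightarrow> (nat \<Rightarrow> nat \<Rightarrow> nat option) \<Rightarrow> (nat \<Rightarrow> nat \<Rightarrow> nat option) \<Rightarrow> bool" where
  "pls_contained n L M \<longleftrightarrow> (\<forall>i<n. \<forall>j<n. L i j \<noteq> None \<longrightarrow> M i j = L i j)"

end

theory Submission
  imports Defs
begin

lemma hall:
  assumes "finite A" "\<forall>a\<in>A. finite (S a)" "\<forall>X\<subseteq>A. card X \<le> card (\<Union>(S ` X))"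
  shows "\<exists>f. inj_on f A \<and> (\<forall>a\<in>A. f a \<in> S a)"
  using assms
proof (induction "card A" arbitrary: A S rule: less_induct)
  case less
  show ?case
  proof (cases "A = {}")
    case True then show ?thesis by auto
  next
    case ne: False
    show ?thesis
    proof (cases "\<forall>X. X \<subseteq> A \<and> X \<noteq> {} \<and> X \<noteq> A \<longrightarrow> card X < card (\<Union>(S ` X))")
      case True
      obtain a where a: "a \<in> A" using ne by auto
      have "card {a} \<le> card (\<Union>(S ` {a}))" using less.prems(3) a by auto
      then have "S a \<noteq> {}" by auto
      then obtain b where b: "b \<in> S a" by auto
      define A' where "A' = A - {a}"
      define S' where "S' = (\<lambda>x. S x - {b})"
      have cA': "card A' < card A" unfolding A'_def using card_Diff1_less[OF less.prems(1) a] .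
      have h': "\<forall>X\<subseteq>A'. card X \<le> card (\<Union>(S' ` X))"
      proof (intro allI impI)
        fix X assume X: "X \<subseteq> A'"
        show "card X \<le> card (\<Union>(S' ` X))"
        proof (cases "X = {}")
          case True then show ?thesis by simp
        next
          case False
          have "X \<noteq> A" using X a unfolding A'_def by auto
          moreover have "X \<subseteq> A" using X unfolding A'_def by auto
          ultimately have lt: "card X < card (\<Union>(S ` X))" using True False by blast
          have fin: "finite (\<Union>(S ` X))" using \<open>X \<subseteq> A\<close> less.prems(1,2)
            by (meson finite_UN_I finite_subset subsetD)
          have eq: "\<Union>(S' ` X) = \<Union>(S ` X) - {b}" unfolding S'_def by auto
          have "card (\<Union>(S ` X)) \<le> card (\<Union>(S ` X) - {b}) + 1"
            using fin by (simp add: card_Diff_singleton_if) arith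
          then show ?thesis using lt eq by simp
        qed
      qed
      have "finite A'" using less.prems(1) unfolding A'_def by auto
      moreover have "\<forall>x\<in>A'. finite (S' x)" using less.prems(2) unfolding A'_def S'_def by auto
      ultimately obtain f where f: "inj_on f A'" "\<forall>x\<in>A'. f x \<in> S' x"
        using less.hyps[OF cA'] h' by blast
      have "inj_on (f(a:=b)) A"
        unfolding inj_on_def
      proof (intro ballI impI)
        fix x y assume xy: "x \<in> A" "y \<in> A" "(f(a := b)) x = (f(a := b)) y"
        show "x = y"
        proof (cases "x = a"; cases "y = a")
          assume "x \<noteq> a" "y \<noteq> a" then show ?thesis using xy f(1) unfolding A'_def inj_on_def by auto
        next
          assume "x = a" "y \<noteq> a" then show ?thesis using xy f(2) unfolding A'_def S'_def by force
        next
          assume "x \<noteq> a" "y = a" then show ?thesis using xy f(2) unfolding A'_def S'_def by force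
        qed auto
      qed
      moreover have "\<forall>x\<in>A. (f(a:=b)) x \<in> S x" using f(2) b unfolding A'_def S'_def by auto
      ultimately show ?thesis by blast
    next
      case False
      then obtain X where X: "X \<subseteq> A" "X \<noteq> {}" "X \<noteq> A" "card (\<Union>(S ` X)) \<le> card X"
        by (auto simp: not_less)
      have finX: "finite X" using X(1) less.prems(1) finite_subset by auto
      have cX: "card X < card A" using X less.prems(1) by (meson psubsetI psubset_card_mono)
      obtain f1 where f1: "inj_on f1 X" "\<forall>x\<in>X. f1 x \<in> S x"
        using less.hyps[OF cX, of S] finX less.prems X(1) by (meson dual_order.trans subsetD)
      define U where "U = \<Union>(S ` X)"
      have finU: "finite U" unfolding U_def using finX X(1) less.prems(2) by auto
      have cU: "card U = card X" using X(4) less.prems(3) X(1) unfolding U_def by (simp add: le_antisym)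
      define A2 where "A2 = A - X"
      define S2 where "S2 = (\<lambda>x. S x - U)"
      have cA2: "card A2 < card A" unfolding A2_def using X less.prems(1)
        using card_Diff_subset[OF finX X(1)] X(2) finX cX card_gt_0_iff[of X] by simp
      have h2: "\<forall>Y\<subseteq>A2. card Y \<le> card (\<Union>(S2 ` Y))"
      proof (intro allI impI)
        fix Y assume Y: "Y \<subseteq> A2"
        have finY: "finite Y" using Y less.prems(1) unfolding A2_def by (meson finite_Diff finite_subset)
        have dis: "X \<inter> Y = {}" using Y unfolding A2_def by auto
        have XY: "X \<union> Y \<subseteq> A" using Y X(1) unfolding A2_def by auto
        have u: "\<Union>(S ` (X \<union> Y)) = U \<union> \<Union>(S2 ` Y)" unfolding U_def S2_def by auto
        have finS2: "finite (\<Union>(S2 ` Y))" using finY Y less.prems(2) unfolding S2_def A2_def by auto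
        have "card (X \<union> Y) \<le> card (\<Union>(S ` (X \<union> Y)))" using less.prems(3) XY by blast
        also have "\<dots> = card U + card (\<Union>(S2 ` Y))" unfolding u
          by (rule card_Un_disjoint[OF finU finS2]) (auto simp: S2_def)
        finally show "card Y \<le> card (\<Union>(S2 ` Y))" using card_Un_disjoint[OF finX finY dis] cU by simp
      qed
      have "finite A2" using less.prems(1) unfolding A2_def by auto
      moreover have "\<forall>x\<in>A2. finite (S2 x)" using less.prems(2) unfolding A2_def S2_def by auto
      ultimately obtain f2 where f2: "inj_on f2 A2" "\<forall>x\<in>A2. f2 x \<in> S2 x"
        using less.hyps[OF cA2] h2 by blast
      define f where "f = (\<lambda>x. if x \<in> X then f1 x else f2 x)"
      have "inj_on f A"
        unfolding inj_on_def
      proof (intro ballI impI)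
        fix x y assume xy: "x \<in> A" "y \<in> A" "f x = f y"
        show "x = y"
        proof (cases "x \<in> X"; cases "y \<in> X")
          assume "x \<in> X" "y \<in> X" then show ?thesis using xy f1(1) unfolding f_def inj_on_def by auto
        next
          assume "x \<notin> X" "y \<notin> X" then show ?thesis using xy f2(1) unfolding f_def A2_def inj_on_def by auto
        next
          assume "x \<in> X" "y \<notin> X" then show ?thesis using xy f1(2) f2(2) unfolding f_def A2_def S2_def U_def by force
        next
          assume h: "x \<notin> X" "y \<in> X"
          then have "f2 x = f1 y" using xy unfolding f_def by simp
          moreover have "f1 y \<in> U" using h f1(2) unfolding U_def by auto
          moreover have "f2 x \<notin> U" using h xy f2(2) unfolding A2_def S2_def by auto
          ultimately show ?thesis by simp
        qed
      qed
      moreover have "\<forall>x\<in>A. f x \<in> S x" using f1(2) f2(2) unfolding f_def A2_def S2_def by auto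
      ultimately show ?thesis by blast
    qed
  qed
qed

lemma hall_degree:
  assumes finA: "finite A" and finB: "finite B" and sub: "\<forall>a\<in>A. S a \<subseteq> B"
    and dA: "\<forall>a\<in>A. d \<le> card (S a)" and dB: "\<forall>b\<in>B. d \<le> card {a\<in>A. b \<in> S a}"
    and cAB: "card A \<le> card B" and c2: "card A \<le> 2 * d"
  shows "\<exists>f. inj_on f A \<and> (\<forall>a\<in>A. f a \<in> S a)"
proof (rule hall[OF finA])
  show "\<forall>a\<in>A. finite (S a)" using sub finB finite_subset by blast
  show "\<forall>X\<subseteq>A. card X \<le> card (\<Union>(S ` X))"
  proof (intro allI impI)
    fix X assume X: "X \<subseteq> A"
    have finX: "finite X" using X finA finite_subset by blast
    have finU: "finite (\<Union>(S ` X))" using X sub finB by (meson UN_least finite_subset subset_iff)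
    show "card X \<le> card (\<Union>(S ` X))"
    proof (cases "card X \<le> d")
      case True
      show ?thesis
      proof (cases "X = {}")
        case True then show ?thesis by simp
      next
        case False
        then obtain a where a: "a \<in> X" by auto
        have "d \<le> card (S a)" using dA a X by auto
        also have "\<dots> \<le> card (\<Union>(S ` X))" using a finU by (intro card_mono) auto
        finally show ?thesis using True by simp
      qed
    next
      case False
      have "B \<subseteq> \<Union>(S ` X)"
      proof
        fix b assume b: "b \<in> B"
        define T where "T = {a\<in>A. b \<in> S a}"
        have cT: "d \<le> card T" using dB b unfolding T_def by auto
        have finT: "finite T" using finA unfolding T_def by auto
        have "X \<inter> T \<noteq> {}"
        proof
          assume dis: "X \<inter> T = {}"
          have "card (X \<union> T) = card X + card T" using card_Un_disjoint[OF finX finT dis] .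
          moreover have "card (X \<union> T) \<le> card A" using X finA unfolding T_def by (intro card_mono) auto
          ultimately show False using cT False c2 by linarith
        qed
        then show "b \<in> \<Union>(S ` X)" unfolding T_def by auto
      qed
      then have "card B \<le> card (\<Union>(S ` X))" using finU card_mono by blast
      moreover have "card X \<le> card A" using X finA card_mono by blast
      ultimately show ?thesis using cAB by linarith
    qed
  qed
qed

theorem theorem5p7:
  fixes n k :: nat and L :: "nat \<Rightarrow> nat \<Rightarrow> nat option"
  assumes "0 < n" and "0 < k" and "4 * k \<le> n"
    and "homogeneous_pls k n L"
  shows "\<exists>M. homogeneous_pls (k + 1) n M \<and> pls_contained n L M"
proof -
  from assms(4) have pls: "partial_latin_square n L"
    and sym: "\<forall>s\<in>{1..n}. card {(i, j). i < n \<and> j < n \<and> L i j = Some s} = k"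
    and row: "\<forall>i<n. card {j. j < n \<and> L i j \<noteq> None} = k"
    and col: "\<forall>j<n. card {i. i < n \<and> L i j \<noteq> None} = k"
    unfolding homogeneous_pls_def by blast+
  have PL: "(\<forall>i j. (i \<ge> n \<or> j \<ge> n) \<longrightarrow> L i j = None) \<and>
     (\<forall>i<n. \<forall>j<n. \<forall>s. L i j = Some s \<longrightarrow> s \<in> {1..n}) \<and>
     (\<forall>i<n. \<forall>j1<n. \<forall>j2<n. j1 \<noteq> j2 \<longrightarrow> L i j1 \<noteq> None \<longrightarrow> L i j1 \<noteq> L i j2) \<and>
     (\<forall>j<n. \<forall>i1<n. \<forall>i2<n. i1 \<noteq> i2 \<longrightarrow> L i1 j \<noteq> None \<longrightarrow> L i1 j \<noteq> L i2 j)"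
    using pls unfolding partial_latin_square_def .
  have out: "\<And>i j. i \<ge> n \<or> j \<ge> n \<Longrightarrow> L i j = None"
    using conjunct1[OF PL] by blast
  have rng: "\<And>i j s. i < n \<Longrightarrow> j < n \<Longrightarrow> L i j = Some s \<Longrightarrow> s \<in> {1..n}"
    using conjunct1[OF conjunct2[OF PL]] by blast
  have rowd: "\<And>i j1 j2. i < n \<Longrightarrow> j1 < n \<Longrightarrow> j2 < n \<Longrightarrow> j1 \<noteq> j2 \<Longrightarrow> L i j1 \<noteq> None \<Longrightarrow> L i j1 \<noteq> L i j2"
    using conjunct1[OF conjunct2[OF conjunct2[OF PL]]] by blast
  have cold: "\<And>j i1 i2. j < n \<Longrightarrow> i1 < n \<Longrightarrow> i2 < n \<Longrightarrow> i1 \<noteq> i2 \<Longrightarrow> L i1 j \<noteq> None \<Longrightarrow> L i1 j \<noteq> L i2 j"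
    using conjunct2[OF conjunct2[OF conjunct2[OF PL]]] by blast
  have kn: "k \<le> n" using assms(3) by linarith
  have rowE: "card {j. j < n \<and> L i j = None} = n - k" if i: "i < n" for i
  proof -
    have eq: "{j. j < n \<and> L i j = None} = {0..<n} - {j. j < n \<and> L i j \<noteq> None}" by auto
    have sub: "{j. j < n \<and> L i j \<noteq> None} \<subseteq> {0..<n}" by auto
    have fin: "finite {j. j < n \<and> L i j \<noteq> None}" by simp
    have "card ({0..<n} - {j. j < n \<and> L i j \<noteq> None}) = card {0..<n} - card {j. j < n \<and> L i j \<noteq> None}" by (rule card_Diff_subset[OF fin sub])
    then show ?thesis unfolding eq using row i by simp
  qed
  have colE: "card {i. i < n \<and> L i j = None} = n - k" if j: "j < n" for j
  proof -
    have eq: "{i. i < n \<and> L i j = None} = {0..<n} - {i. i < n \<and> L i j \<noteq> None}" by auto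
    have sub: "{i. i < n \<and> L i j \<noteq> None} \<subseteq> {0..<n}" by auto
    have fin: "finite {i. i < n \<and> L i j \<noteq> None}" by simp
    have "card ({0..<n} - {i. i < n \<and> L i j \<noteq> None}) = card {0..<n} - card {i. i < n \<and> L i j \<noteq> None}" by (rule card_Diff_subset[OF fin sub])
    then show ?thesis unfolding eq using col j by simp
  qed
  have "\<exists>f. inj_on f {0..<n} \<and> (\<forall>i\<in>{0..<n}. f i \<in> {j. j < n \<and> L i j = None})"
  proof (rule hall_degree[where B = "{0..<n}" and d = "n - k"])
    show "\<forall>b\<in>{0..<n}. n - k \<le> card {a \<in> {0..<n}. b \<in> {j. j < n \<and> L a j = None}}"
    proof
      fix b assume b: "b \<in> {0..<n}"
      have "{a \<in> {0..<n}. b \<in> {j. j < n \<and> L a j = None}} = {i. i < n \<and> L i b = None}" using b by auto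
      then show "n - k \<le> card {a \<in> {0..<n}. b \<in> {j. j < n \<and> L a j = None}}" using colE b by simp
    qed
  qed (use rowE assms(3) in auto)
  then obtain \<sigma> where \<sigma>inj: "inj_on \<sigma> {0..<n}" and \<sigma>E: "\<forall>i\<in>{0..<n}. \<sigma> i \<in> {j. j < n \<and> L i j = None}"
    by blast
  have \<sigma>lt: "\<And>i. i < n \<Longrightarrow> \<sigma> i < n" using \<sigma>E by auto
  have L\<sigma>: "\<And>i. i < n \<Longrightarrow> L i (\<sigma> i) = None" using \<sigma>E by auto
  have \<sigma>i: "\<And>i i'. i < n \<Longrightarrow> i' < n \<Longrightarrow> \<sigma> i = \<sigma> i' \<Longrightarrow> i = i'" using \<sigma>inj unfolding inj_on_def by auto
  have \<sigma>img: "\<sigma> ` {0..<n} = {0..<n}"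
  proof (rule card_seteq)
    show "\<sigma> ` {0..<n} \<subseteq> {0..<n}" using \<sigma>lt by auto
    show "card {0..<n} \<le> card (\<sigma> ` {0..<n})" using card_image[OF \<sigma>inj] by simp
  qed simp
  define RS where "RS i = {s. \<exists>j<n. L i j = Some s}" for i
  define CS where "CS j = {s. \<exists>i<n. L i j = Some s}" for j
  have cRS: "finite (RS i) \<and> card (RS i) \<le> k" if i: "i < n" for i
  proof -
    have sub: "RS i \<subseteq> (\<lambda>j. the (L i j)) ` {j. j < n \<and> L i j \<noteq> None}" unfolding RS_def by force
    have fin: "finite ((\<lambda>j. the (L i j)) ` {j. j < n \<and> L i j \<noteq> None})" by auto
    have "card (RS i) \<le> card ((\<lambda>j. the (L i j)) ` {j. j < n \<and> L i j \<noteq> None})" using card_mono[OF fin sub] .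
    also have "\<dots> \<le> k" using card_image_le[of "{j. j < n \<and> L i j \<noteq> None}" "\<lambda>j. the (L i j)"] row i by auto
    finally show ?thesis using finite_subset[OF sub fin] by simp
  qed
  have cCS: "finite (CS j) \<and> card (CS j) \<le> k" if j: "j < n" for j
  proof -
    have sub: "CS j \<subseteq> (\<lambda>i. the (L i j)) ` {i. i < n \<and> L i j \<noteq> None}" unfolding CS_def by force
    have fin: "finite ((\<lambda>i. the (L i j)) ` {i. i < n \<and> L i j \<noteq> None})" by auto
    have "card (CS j) \<le> card ((\<lambda>i. the (L i j)) ` {i. i < n \<and> L i j \<noteq> None})" using card_mono[OF fin sub] .
    also have "\<dots> \<le> k" using card_image_le[of "{i. i < n \<and> L i j \<noteq> None}" "\<lambda>i. the (L i j)"] col j by auto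
    finally show ?thesis using finite_subset[OF sub fin] by simp
  qed
  define Sy where "Sy i = {1..n} - (RS i \<union> CS (\<sigma> i))" for i
  have cSy: "n - 2 * k \<le> card (Sy i)" if i: "i < n" for i
  proof -
    have f: "finite (RS i \<union> CS (\<sigma> i))" using cRS[OF i] cCS[OF \<sigma>lt[OF i]] by auto
    have "card (RS i \<union> CS (\<sigma> i)) \<le> k + k"
      using card_Un_le[of "RS i" "CS (\<sigma> i)"] cRS[OF i] cCS[OF \<sigma>lt[OF i]] by linarith
    moreover have "card {1..n} - card (RS i \<union> CS (\<sigma> i)) \<le> card (Sy i)"
      unfolding Sy_def using diff_card_le_card_Diff[OF f] by blast
    ultimately show ?thesis by simp
  qed
  define P where "P s = {(i, j). i < n \<and> j < n \<and> L i j = Some s}" for s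
  have finP: "finite (P s)" for s
  proof -
    have "P s \<subseteq> {0..<n} \<times> {0..<n}" unfolding P_def by auto
    then show ?thesis using finite_subset by blast
  qed
  have cSyB: "n - 2 * k \<le> card {i \<in> {0..<n}. s \<in> Sy i}" if s: "s \<in> {1..n}" for s
  proof -
    define R where "R = fst ` P s"
    define C where "C = snd ` P s"
    have cR: "card R \<le> k" unfolding R_def using card_image_le[OF finP, of fst s] sym s unfolding P_def by auto
    have cC: "card C \<le> k" unfolding C_def using card_image_le[OF finP, of snd s] sym s unfolding P_def by auto
    have finC: "finite C" unfolding C_def using finP by auto
    define Q where "Q = {i. i < n \<and> \<sigma> i \<in> C}"
    have "card Q = card (\<sigma> ` Q)"
      using card_image[OF inj_on_subset[OF \<sigma>inj]] unfolding Q_def by (metis (no_types, lifting) atLeastLessThan_iff mem_Collect_eq subsetI zero_le)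
    also have "\<dots> \<le> card C" using finC by (intro card_mono) (auto simp: Q_def)
    finally have cQ: "card Q \<le> k" using cC by linarith
    have sub: "{0..<n} - (R \<union> Q) \<subseteq> {i \<in> {0..<n}. s \<in> Sy i}"
    proof
      fix i assume i: "i \<in> {0..<n} - (R \<union> Q)"
      have "s \<notin> RS i"
      proof
        assume "s \<in> RS i"
        then obtain j where "j < n" "L i j = Some s" unfolding RS_def by auto
        then have "(i, j) \<in> P s" using i unfolding P_def by auto
        then have "i \<in> R" unfolding R_def by force
        then show False using i by auto
      qed
      moreover have "s \<notin> CS (\<sigma> i)"
      proof
        assume "s \<in> CS (\<sigma> i)"
        then obtain i' where "i' < n" "L i' (\<sigma> i) = Some s" unfolding CS_def by auto
        then have "(i', \<sigma> i) \<in> P s" using i \<sigma>lt unfolding P_def by auto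
        then have "\<sigma> i \<in> C" unfolding C_def by force
        then have "i \<in> Q" using i unfolding Q_def by auto
        then show False using i by auto
      qed
      ultimately show "i \<in> {i \<in> {0..<n}. s \<in> Sy i}" using i s unfolding Sy_def by auto
    qed
    have "n - 2 * k \<le> card {0..<n} - card (R \<union> Q)"
      using card_Un_le[of R Q] cR cQ by simp
    also have "\<dots> \<le> card ({0..<n} - (R \<union> Q))" using diff_card_le_card_Diff[of "R \<union> Q" "{0..<n}"]
      finP finC unfolding R_def Q_def by auto
    also have "\<dots> \<le> card {i \<in> {0..<n}. s \<in> Sy i}" using sub by (intro card_mono) auto
    finally show ?thesis .
  qed
  have "\<exists>f. inj_on f {0..<n} \<and> (\<forall>i\<in>{0..<n}. f i \<in> Sy i)"
  proof (rule hall_degree[where B = "{1..n}" and d = "n - 2 * k"])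
  qed (use cSy cSyB assms(3) in \<open>auto simp: Sy_def\<close>)
  then obtain \<tau> where \<tau>inj: "inj_on \<tau> {0..<n}" and \<tau>S: "\<forall>i\<in>{0..<n}. \<tau> i \<in> Sy i" by blast
  have \<tau>img: "\<tau> ` {0..<n} = {1..n}"
  proof (rule card_seteq)
    show "\<tau> ` {0..<n} \<subseteq> {1..n}" using \<tau>S unfolding Sy_def by auto
    show "card {1..n} \<le> card (\<tau> ` {0..<n})" using card_image[OF \<tau>inj] by simp
  qed simp
  have \<tau>i: "\<And>i i'. i < n \<Longrightarrow> i' < n \<Longrightarrow> \<tau> i = \<tau> i' \<Longrightarrow> i = i'" using \<tau>inj unfolding inj_on_def by auto
  have \<tau>r: "\<tau> i \<in> {1..n}" if "i < n" for i using \<tau>S that unfolding Sy_def by auto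
  have nr: "L i j \<noteq> Some (\<tau> i)" if "i < n" "j < n" for i j
    using \<tau>S that unfolding Sy_def RS_def by auto
  have nc: "L i' (\<sigma> i) \<noteq> Some (\<tau> i)" if "i < n" "i' < n" for i i'
    using \<tau>S that unfolding Sy_def CS_def by auto
  define M where "M i j = (if i < n \<and> j < n \<and> j = \<sigma> i then Some (\<tau> i) else L i j)" for i j
  have cont: "pls_contained n L M"
    unfolding pls_contained_def M_def using L\<sigma> by auto
  have plsM: "partial_latin_square n M"
    unfolding partial_latin_square_def
  proof (intro conjI allI impI)
    fix i j assume "n \<le> i \<or> n \<le> j" then show "M i j = None" using out unfolding M_def by auto
  next
    fix i j s assume "i < n" "j < n" "M i j = Some s" then show "s \<in> {1..n}"
      using rng \<tau>r unfolding M_def by (auto split: if_splits)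
  next
    fix i j1 j2 assume h: "i < n" "j1 < n" "j2 < n" "j1 \<noteq> j2" "M i j1 \<noteq> None"
    show "M i j1 \<noteq> M i j2"
    proof (cases "j1 = \<sigma> i")
      case True
      then have "M i j2 = L i j2" "M i j1 = Some (\<tau> i)" using h unfolding M_def by auto
      then show ?thesis using nr h by metis
    next
      case False
      then have m1: "M i j1 = L i j1" using h unfolding M_def by auto
      show ?thesis
      proof (cases "j2 = \<sigma> i")
        case True
        then have "M i j2 = Some (\<tau> i)" using h unfolding M_def by auto
        then show ?thesis using m1 nr h by metis
      next
        case False
        then have "M i j2 = L i j2" using h unfolding M_def by auto
        then show ?thesis using m1 rowd h by metis
      qed
    qed
  next
    fix j i1 i2 assume h: "j < n" "i1 < n" "i2 < n" "i1 \<noteq> i2" "M i1 j \<noteq> None"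
    show "M i1 j \<noteq> M i2 j"
    proof (cases "j = \<sigma> i1")
      case True
      then have "j \<noteq> \<sigma> i2" using \<sigma>i h by metis
      then have "M i2 j = L i2 (\<sigma> i1)" "M i1 j = Some (\<tau> i1)" using h True unfolding M_def by auto
      then show ?thesis using nc h by metis
    next
      case False
      then have m1: "M i1 j = L i1 j" using h unfolding M_def by auto
      show ?thesis
      proof (cases "j = \<sigma> i2")
        case True
        then have "M i2 j = Some (\<tau> i2)" using h unfolding M_def by auto
        then show ?thesis using m1 nc h True by metis
      next
        case False
        then have "M i2 j = L i2 j" using h unfolding M_def by auto
        then show ?thesis using m1 cold h by metis
      qed
    qed
  qed
  have symM: "\<forall>s\<in>{1..n}. card {(i, j). i < n \<and> j < n \<and> M i j = Some s} = k + 1"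
  proof
    fix s assume s: "s \<in> {1..n}"
    obtain i0 where i0: "i0 < n" "\<tau> i0 = s" using s \<tau>img by (metis atLeastLessThan_iff imageE)
    have eq: "{(i, j). i < n \<and> j < n \<and> M i j = Some s} = insert (i0, \<sigma> i0) (P s)"
    proof (rule set_eqI, clarify)
      fix i j
      show "((i, j) \<in> {(i, j). i < n \<and> j < n \<and> M i j = Some s}) = ((i, j) \<in> insert (i0, \<sigma> i0) (P s))"
        using i0 \<tau>i L\<sigma> \<sigma>lt unfolding M_def P_def by (auto split: if_splits)
    qed
    have "(i0, \<sigma> i0) \<notin> P s" using L\<sigma> i0 unfolding P_def by auto
    then show "card {(i, j). i < n \<and> j < n \<and> M i j = Some s} = k + 1"
      unfolding eq using finP sym s unfolding P_def by simp
  qed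
  have rowM: "\<forall>i<n. card {j. j < n \<and> M i j \<noteq> None} = k + 1"
  proof (intro allI impI)
    fix i assume i: "i < n"
    have eq: "{j. j < n \<and> M i j \<noteq> None} = insert (\<sigma> i) {j. j < n \<and> L i j \<noteq> None}"
      using i \<sigma>lt unfolding M_def by auto
    have "\<sigma> i \<notin> {j. j < n \<and> L i j \<noteq> None}" using L\<sigma> i by auto
    then show "card {j. j < n \<and> M i j \<noteq> None} = k + 1" unfolding eq using row i by simp
  qed
  have colM: "\<forall>j<n. card {i. i < n \<and> M i j \<noteq> None} = k + 1"
  proof (intro allI impI)
    fix j assume j: "j < n"
    obtain i0 where i0: "i0 < n" "\<sigma> i0 = j" using j \<sigma>img by (metis atLeastLessThan_iff imageE zero_le)
    have eq: "{i. i < n \<and> M i j \<noteq> None} = insert i0 {i. i < n \<and> L i j \<noteq> None}"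
      using i0 \<sigma>i j unfolding M_def by auto
    have "i0 \<notin> {i. i < n \<and> L i j \<noteq> None}" using L\<sigma> i0 by auto
    then show "card {i. i < n \<and> M i j \<noteq> None} = k + 1" unfolding eq using col j by simp
  qed
  have "homogeneous_pls (k + 1) n M"
    unfolding homogeneous_pls_def using plsM symM rowM colM by blast
  then show ?thesis using cont by blast
qed

end
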